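(* Let $G=(V,E)$ be a finite simple graph and let $\widehat G$ be its associated 2-colored complete graph. Then $G$ is a threshold graph if and only if $\dim \mathcal{A}(\widehat G)=0$.
   Context: A simple graph $G=(V,E)$ is threshold if there are real vertex weights $c(v)$, $v\in V$, such that every pair $\{u,v\}\in\binom{V}{2}$ satisfies $c(u)+c(v)>0$ if $\{u,v\}\in E$ and $c(u)+c(v)<0$ if $\{u,v\}\notin E$. The associated 2-colored graph $\widehat G$ is the complete graph $(V,\binom{V}{2})$ in which a pair is colored red if it is an edge of $G$ and blue otherwise. For a 2-colored graph $H=(V,F)$ (edges colored red/blue), the alternating cone $\mathcal{A}(H)\subseteq\mathbb{R}^F$ is the set of $x\in\mathbb{R}^F$ with $x(e)\ge 0$ for all $e\in F$ and, for every vertex $v$, the sum of $x(e)$ over red edges $e$ incident with $v$ equals the sum of $x(e)$ over blue edges $e$ incident with $v$. *)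

theory Defs
  imports "HOL-Analysis.Analysis"
begin

text \<open>Vectors in R^F are represented as vectors in real ^ ('a set)
  whose coordinates outside F vanish (a canonical copy of R^F).\<close>

definition pairs :: "'a set \<Rightarrow> 'a set set" where
  "pairs V = {{u, v} | u v. u \<in> V \<and> v \<in> V \<and> u \<noteq> v}"

definition simple_graph :: "'a set \<Rightarrow> 'a set set \<Rightarrow> bool" where
  "simple_graph V E \<longleftrightarrow> finite V \<and> E \<subseteq> pairs V"

definition threshold_graph :: "'a set \<Rightarrow> 'a set set \<Rightarrow> bool" where
  "threshold_graph V E \<longleftrightarrow> (\<exists>c :: 'a \<Rightarrow> real.
     \<forall>u\<in>V. \<forall>v\<in>V. u \<noteq> v \<longrightarrow>
       ({u, v} \<in> E \<longrightarrow> c u + c v > 0) \<and> ({u, v} \<notin> E \<longrightarrow> c u + c v < 0))"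

text \<open>A 2-colored graph H = (V, F) with red edges R \<subseteq> F and blue edges F - R.\<close>
definition alternating_cone ::
  "'a::finite set \<Rightarrow> 'a set set \<Rightarrow> 'a set set \<Rightarrow> (real ^ ('a set)) set" where
  "alternating_cone V F R = {x.
     (\<forall>e. e \<notin> F \<longrightarrow> x $ e = 0) \<and>
     (\<forall>e\<in>F. x $ e \<ge> 0) \<and>
     (\<forall>v\<in>V. (\<Sum>e\<in>{e\<in>F. e \<in> R \<and> v \<in> e}. x $ e) = (\<Sum>e\<in>{e\<in>F. e \<notin> R \<and> v \<in> e}. x $ e))}"

definition hat_alternating_cone :: "'a::finite set \<Rightarrow> 'a set set \<Rightarrow> (real ^ ('a set)) set" where
  "hat_alternating_cone V E = alternating_cone V (pairs V) E"

end

theory Submission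
  imports Defs
begin

lemma pairs_elem: "e \<in> pairs V \<Longrightarrow> \<exists>u v. e = {u,v} \<and> u \<in> V \<and> v \<in> V \<and> u \<noteq> v"
  unfolding pairs_def by blast

lemma vertex_identity:
  fixes w :: "'a set \<Rightarrow> real" and P :: "'a set set"
  assumes "finite P"
  shows "(\<Sum>e\<in>{e\<in>P. v \<in> e}. (if e \<in> E then 1 else -1) * w e)
       = (\<Sum>e\<in>{e\<in>P. e \<in> E \<and> v \<in> e}. w e) - (\<Sum>e\<in>{e\<in>P. e \<notin> E \<and> v \<in> e}. w e)"
proof -
  have f: "finite {e\<in>P. v \<in> e}" using assms by simp
  have "(\<Sum>e\<in>{e\<in>P. v \<in> e}. (if e \<in> E then 1 else -1) * w e)
     = (\<Sum>e\<in>{e\<in>P. v \<in> e}. if e \<in> E then w e else - w e)"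
    by (rule sum.cong) auto
  also have "\<dots> = (\<Sum>e\<in>{e\<in>P. v \<in> e} \<inter> {e. e \<in> E}. w e) + (\<Sum>e\<in>{e\<in>P. v \<in> e} \<inter> - {e. e \<in> E}. - w e)"
    by (rule sum.If_cases[OF f])
  also have "{e\<in>P. v \<in> e} \<inter> {e. e \<in> E} = {e\<in>P. e \<in> E \<and> v \<in> e}" by auto
  also have "{e\<in>P. v \<in> e} \<inter> - {e. e \<in> E} = {e\<in>P. e \<notin> E \<and> v \<in> e}" by auto
  finally show ?thesis by (simp add: sum_negf)
qed

theorem theorem2p1:
  fixes V :: "'a::finite set" and E :: "'a set set"
  assumes "simple_graph V E"
  shows "threshold_graph V E \<longleftrightarrow> aff_dim (hat_alternating_cone V E) = 0"
proof -
  define P where "P = pairs V"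
  define s where "s e = (if e \<in> E then 1 else -1 :: real)" for e :: "'a set"
  have finP: "finite P" by simp
  have zero_in: "0 \<in> hat_alternating_cone V E"
    unfolding hat_alternating_cone_def alternating_cone_def by simp
  have "aff_dim (hat_alternating_cone V E) = 0 \<longleftrightarrow> hat_alternating_cone V E = {0}"
    using zero_in by (auto simp: aff_dim_eq_0)
  also have "\<dots> \<longleftrightarrow> (\<forall>x\<in>hat_alternating_cone V E. x = 0)" using zero_in by auto
  finally have eq: "aff_dim (hat_alternating_cone V E) = 0 \<longleftrightarrow> (\<forall>x\<in>hat_alternating_cone V E. x = 0)" .
  have vert: "(\<Sum>e\<in>{e\<in>P. v \<in> e}. s e * (x $ e)) = 0" if "x \<in> hat_alternating_cone V E" "v \<in> V" for x v
    using that vertex_identity[OF finP, where v=v and E=E and w="\<lambda>e. x $ e"]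
    unfolding hat_alternating_cone_def alternating_cone_def s_def P_def by auto
  show ?thesis unfolding eq
  proof
    assume "threshold_graph V E"
    then obtain c :: "'a \<Rightarrow> real" where c: "\<forall>u\<in>V. \<forall>v\<in>V. u \<noteq> v \<longrightarrow>
       ({u, v} \<in> E \<longrightarrow> c u + c v > 0) \<and> ({u, v} \<notin> E \<longrightarrow> c u + c v < 0)"
      unfolding threshold_graph_def by blast
    have pos: "s e * (\<Sum>w\<in>e. c w) > 0" if "e \<in> P" for e
    proof -
      obtain u v where "e = {u,v}" "u \<in> V" "v \<in> V" "u \<noteq> v" using pairs_elem[of e V] \<open>e \<in> P\<close> P_def by blast
      then show ?thesis using c by (force simp: s_def)
    qed
    show "\<forall>x\<in>hat_alternating_cone V E. x = 0"
    proof
      fix x assume x: "x \<in> hat_alternating_cone V E"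
      have out: "x $ e = 0" if "e \<notin> P" for e
        using x that unfolding hat_alternating_cone_def alternating_cone_def P_def by auto
      have nn: "x $ e \<ge> 0" if "e \<in> P" for e
        using x that unfolding hat_alternating_cone_def alternating_cone_def P_def by auto
      have sub: "e \<subseteq> V" if "e \<in> P" for e using pairs_elem[of e V] that P_def by blast
      have "(\<Sum>e\<in>P. x $ e * (s e * (\<Sum>w\<in>e. c w)))
          = (\<Sum>e\<in>P. \<Sum>w\<in>V. if w \<in> e then c w * (s e * x $ e) else 0)"
      proof (rule sum.cong[OF refl])
        fix e assume "e \<in> P"
        then have "e = V \<inter> e" using sub by blast
        then have "(\<Sum>w\<in>e. c w) = (\<Sum>w\<in>V. if w \<in> e then c w else 0)"
          using sum.inter_restrict[where A="V" and g="c" and B="e"] by simp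
        then have "x $ e * (s e * (\<Sum>w\<in>e. c w)) = (\<Sum>w\<in>V. x $ e * (s e * (if w \<in> e then c w else 0)))"
          by (simp only: sum_distrib_left)
        also have "\<dots> = (\<Sum>w\<in>V. if w \<in> e then c w * (s e * x $ e) else 0)"
          by (rule sum.cong) auto
        finally show "x $ e * (s e * (\<Sum>w\<in>e. c w)) = (\<Sum>w\<in>V. if w \<in> e then c w * (s e * x $ e) else 0)" .
      qed
      also have "\<dots> = (\<Sum>w\<in>V. \<Sum>e\<in>P. if w \<in> e then c w * (s e * x $ e) else 0)"
        by (rule sum.swap)
      also have "\<dots> = (\<Sum>w\<in>V. c w * (\<Sum>e\<in>{e\<in>P. w \<in> e}. s e * x $ e))"
      proof (rule sum.cong[OF refl])
        fix w
        have "(\<Sum>e\<in>P. if w \<in> e then c w * (s e * x $ e) else 0) = (\<Sum>e\<in>P \<inter> {e. w \<in> e}. c w * (s e * x $ e))"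
          using sum.inter_restrict[where A="P" and g="\<lambda>e. c w * (s e * x $ e)" and B="{e. w \<in> e}"] by simp
        also have "P \<inter> {e. w \<in> e} = {e\<in>P. w \<in> e}" by auto
        finally show "(\<Sum>e\<in>P. if w \<in> e then c w * (s e * x $ e) else 0) = c w * (\<Sum>e\<in>{e\<in>P. w \<in> e}. s e * x $ e)"
          by (simp add: sum_distrib_left)
      qed
      also have "\<dots> = 0" using vert[OF x] by simp
      finally have S0: "(\<Sum>e\<in>P. x $ e * (s e * (\<Sum>w\<in>e. c w))) = 0" .
      have "\<forall>e\<in>P. x $ e * (s e * (\<Sum>w\<in>e. c w)) = 0"
        using sum_nonneg_eq_0_iff[OF finP, of "\<lambda>e. x $ e * (s e * (\<Sum>w\<in>e. c w))"] S0 nn pos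
        by (simp add: less_imp_le)
      then have "\<forall>e\<in>P. x $ e = 0" using pos by (metis less_irrefl mult_eq_0_iff)
      then show "x = 0" using out by (metis vec_eq_iff zero_index)
    qed
  next
    assume H: "\<forall>x\<in>hat_alternating_cone V E. x = 0"
    define a where "a e = (\<chi> w. if w \<in> e then s e else 0)" for e :: "'a set"
    have inj: "inj_on a P"
    proof
      fix e e' assume "a e = a e'"
      then have "\<forall>w. (a e $ w \<noteq> 0) = (a e' $ w \<noteq> 0)" by simp
      then show "e = e'" unfolding a_def s_def by (auto split: if_splits)
    qed
    define K where "K = convex hull (a ` P)"
    have "0 \<notin> K"
    proof
      assume "0 \<in> K"
      then obtain u where u: "\<forall>y\<in>a ` P. 0 \<le> u y" "sum u (a ` P) = 1" "(\<Sum>y\<in>a ` P. u y *\<^sub>R y) = 0"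
        unfolding K_def convex_hull_finite[OF finite_imageI[OF finP]] by blast
      have u1: "(\<Sum>e\<in>P. u (a e)) = 1" using u(2) sum.reindex[OF inj, of u] by simp
      have u2: "(\<Sum>e\<in>P. u (a e) *\<^sub>R a e) = 0" using u(3) sum.reindex[OF inj, of "\<lambda>y. u y *\<^sub>R y"] by simp
      define x :: "real ^ ('a set)" where "x = (\<chi> e. if e \<in> P then u (a e) else 0)"
      have "x \<in> hat_alternating_cone V E"
        unfolding hat_alternating_cone_def alternating_cone_def
      proof (intro CollectI conjI ballI allI impI)
        fix e assume "e \<notin> pairs V" then show "x $ e = 0" by (simp add: x_def P_def)
      next
        fix e assume "e \<in> pairs V" then show "x $ e \<ge> 0" using u(1) by (simp add: x_def P_def)
      next
        fix v assume "v \<in> V"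
        have "0 = (\<Sum>e\<in>P. u (a e) *\<^sub>R a e) $ v" using u2 by simp
        also have "\<dots> = (\<Sum>e\<in>P. if v \<in> e then s e * u (a e) else 0)"
          by (simp add: a_def sum_component if_distrib mult_ac cong: if_cong)
        also have "\<dots> = (\<Sum>e\<in>P \<inter> {e. v \<in> e}. s e * u (a e))"
          using sum.inter_restrict[where A="P" and g="\<lambda>e. s e * u (a e)" and B="{e. v \<in> e}"] by simp
        also have "P \<inter> {e. v \<in> e} = {e\<in>P. v \<in> e}" by auto
        also have "(\<Sum>e\<in>{e\<in>P. v \<in> e}. s e * u (a e)) = (\<Sum>e\<in>{e\<in>P. v \<in> e}. s e * x $ e)"
          by (rule sum.cong) (auto simp: x_def)
        also have "\<dots> = (\<Sum>e\<in>{e\<in>P. e \<in> E \<and> v \<in> e}. x $ e) - (\<Sum>e\<in>{e\<in>P. e \<notin> E \<and> v \<in> e}. x $ e)"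
          unfolding s_def by (rule vertex_identity[OF finP])
        finally show "(\<Sum>e\<in>{e \<in> pairs V. e \<in> E \<and> v \<in> e}. x $ e) = (\<Sum>e\<in>{e \<in> pairs V. e \<notin> E \<and> v \<in> e}. x $ e)"
          by (simp add: P_def)
      qed
      then have "x = 0" using H by blast
      have "\<forall>e\<in>P. u (a e) = 0"
      proof
        fix e assume eP: "e \<in> P"
        have "x $ e = 0" using \<open>x = 0\<close> by simp
        then show "u (a e) = 0" using eP by (simp add: x_def)
      qed
      then show False using u1 by simp
    qed
    moreover have "convex K" "closed K" unfolding K_def
      by (simp_all add: convex_convex_hull compact_imp_closed finite_imp_compact_convex_hull)
    ultimately obtain c b where cb: "0 < b" "\<forall>y\<in>K. inner c y > b"
      using separating_hyperplane_closed_0 by blast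
    have "inner c (a e) > 0" if "e \<in> P" for e
      using cb that hull_subset[of "a ` P" convex] unfolding K_def by force
    then have key: "s e * (c $ u + c $ v) > 0" if "u \<in> V" "v \<in> V" "u \<noteq> v" "e = {u,v}" for u v e
    proof -
      have eP: "e \<in> P" using that unfolding P_def pairs_def by blast
      have "inner c (a e) = (\<Sum>w\<in>UNIV. if w \<in> e then c $ w * s e else 0)"
        by (simp add: inner_vec_def a_def if_distrib cong: if_cong)
      also have "\<dots> = (\<Sum>w\<in>UNIV \<inter> e. c $ w * s e)" using sum.inter_restrict[where A="UNIV" and g="\<lambda>w. c $ w * s e" and B="e"] by simp
      also have "\<dots> = s e * (c $ u + c $ v)" using that by (simp add: algebra_simps)
      finally show ?thesis using \<open>\<And>e. e \<in> P \<Longrightarrow> inner c (a e) > 0\<close>[OF eP] by simp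
    qed
    show "threshold_graph V E" unfolding threshold_graph_def
    proof (intro exI[of _ "\<lambda>w. c $ w"] ballI impI conjI)
      fix u v assume "u \<in> V" "v \<in> V" "u \<noteq> v"
      { assume "{u,v} \<in> E" then show "c $ u + c $ v > 0" using key[OF \<open>u \<in> V\<close> \<open>v \<in> V\<close> \<open>u \<noteq> v\<close> refl] by (simp add: s_def) }
      { assume "{u,v} \<notin> E" then show "c $ u + c $ v < 0" using key[OF \<open>u \<in> V\<close> \<open>v \<in> V\<close> \<open>u \<noteq> v\<close> refl] by (simp add: s_def) }
    qed
  qed
qed

end
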